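(* Let $\Phi\colon M_2(\mathbb C)\to M_2(\mathbb C)$ be a BJ isomorphism and let $\phi\colon\mathbb C^2\to\mathbb C^2$ be a bijection which maps orthonormal pairs onto orthonormal pairs and satisfies $\Phi(xy^\ast)\doteq\phi(x)\phi(y)^\ast$ for all $x,y\in\mathbb C^2$. Let $A=xy^\ast+\sigma x'(y')^\ast$, where $\{x,x'\}$ and $\{y,y'\}$ are orthonormal bases of $\mathbb C^2$ and $\sigma\in\mathbb C$ with $|\sigma|<1$. Then there exists $\tau\in\mathbb C$ with $|\tau|<1$ such that $\Phi(A)\doteq\phi(x)\phi(y)^\ast+\tau\,\phi(x')\phi(y')^\ast$.
   Context: $M_2(\mathbb C)$ carries the operator (spectral) norm. $X\perp Y$ (Birkhoff–James orthogonality) means $\|X+\lambda Y\|\ge\|X\|$ for all $\lambda\in\mathbb C$. A BJ isomorphism is a bijection $\Phi$ with $X\perp Y\iff\Phi(X)\perp\Phi(Y)$. $X\doteq Y$ means $\mathbb C X=\mathbb C Y$, i.e. $X$ and $Y$ are equal up to a nonzero scalar factor. *)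

theory Defs
  imports "HOL-Analysis.Analysis"
begin

type_synonym cvec = "complex ^ 2"
type_synonym cmat = "complex ^ 2 ^ 2"

definition cinner :: "cvec \<Rightarrow> cvec \<Rightarrow> complex" where
  "cinner x y = (\<Sum>i\<in>UNIV. x $ i * cnj (y $ i))"

definition orthonormal_pair :: "cvec \<Rightarrow> cvec \<Rightarrow> bool" where
  "orthonormal_pair x y \<longleftrightarrow> norm x = 1 \<and> norm y = 1 \<and> cinner x y = 0"

definition outer :: "cvec \<Rightarrow> cvec \<Rightarrow> cmat" where
  "outer x y = (\<chi> i j. x $ i * cnj (y $ j))"

definition mscale :: "complex \<Rightarrow> cmat \<Rightarrow> cmat" where
  "mscale c A = (\<chi> i j. c * A $ i $ j)"

definition opnorm :: "cmat \<Rightarrow> real" where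
  "opnorm A = onorm (\<lambda>v. A *v v)"

definition bj_orth :: "cmat \<Rightarrow> cmat \<Rightarrow> bool" where
  "bj_orth X Y \<longleftrightarrow> (\<forall>l::complex. opnorm (X + mscale l Y) \<ge> opnorm X)"

definition bj_iso :: "(cmat \<Rightarrow> cmat) \<Rightarrow> bool" where
  "bj_iso \<Phi> \<longleftrightarrow> bij \<Phi> \<and> (\<forall>X Y. bj_orth X Y \<longleftrightarrow> bj_orth (\<Phi> X) (\<Phi> Y))"

definition proj_eq :: "cmat \<Rightarrow> cmat \<Rightarrow> bool" where
  "proj_eq X Y \<longleftrightarrow> range (\<lambda>c. mscale c X) = range (\<lambda>c. mscale c Y)"

end

theory Submission
  imports Defs
begin



lemma cvec_eq: "(u::cvec) = v \<longleftrightarrow> u$1 = v$1 \<and> u$2 = v$2"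
  by (simp add: vec_eq_iff forall_2)

lemma cmat_eq: "(M::cmat) = N \<longleftrightarrow> M$1$1 = N$1$1 \<and> M$1$2 = N$1$2 \<and> M$2$1 = N$2$1 \<and> M$2$2 = N$2$2"
  by (simp add: vec_eq_iff forall_2)

lemma norm_sq: "norm (v::cvec) ^ 2 = cmod (v$1) ^ 2 + cmod (v$2) ^ 2"
  by (simp add: norm_vec_def L2_set_def sum_2)

lemma cmod_sq: "complex_of_real (cmod z ^ 2) = z * cnj z"
  by (rule complex_norm_square)

lemma cinner_self: "cinner v v = complex_of_real (norm v ^ 2)"
  by (simp only: norm_sq cinner_def sum_2 of_real_add cmod_sq)

lemma cinner_add_left: "cinner (u + v) w = cinner u w + cinner v w"
  by (simp add: cinner_def sum_2 algebra_simps)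
lemma cinner_scale_left: "cinner (c *s u) w = c * cinner u w"
  by (simp add: cinner_def sum_2 algebra_simps)
lemma cinner_add_right: "cinner w (u + v) = cinner w u + cinner w v"
  by (simp add: cinner_def sum_2 algebra_simps)
lemma cinner_scale_right: "cinner w (c *s u) = cnj c * cinner w u"
  by (simp add: cinner_def sum_2 algebra_simps)
lemma cinner_sym: "cinner u w = cnj (cinner w u)"
  by (simp add: cinner_def sum_2 algebra_simps)

lemma on_props:
  assumes "orthonormal_pair x x'"
  shows "cinner x x = 1" "cinner x' x' = 1" "cinner x x' = 0" "cinner x' x = 0"
  using assms unfolding orthonormal_pair_def
  by (auto simp: cinner_self) (metis cinner_sym complex_cnj_zero)

lemma complete:
  assumes "orthonormal_pair x x'"
  shows "w = cinner w x *s x + cinner w x' *s x'"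
proof -
  note P = on_props[OF assms]
  define p where "p = x$1"
  define q where "q = x$2"
  define r where "r = x'$1"
  define s where "s = x'$2"
  have a: "cnj p * p + cnj q * q = 1" using P(1) by (simp add: cinner_def sum_2 p_def q_def mult.commute)
  have c: "cnj r * r + cnj s * s = 1" using P(2) by (simp add: cinner_def sum_2 r_def s_def mult.commute)
  have b: "cnj p * r + cnj q * s = 0" using P(4) by (simp add: cinner_def sum_2 p_def q_def r_def s_def mult.commute)
  have e: "cnj r * p + cnj s * q = 0" using P(3) by (simp add: cinner_def sum_2 p_def q_def r_def s_def mult.commute)
  define d where "d = p * s - q * r"
  have 1: "cnj p * d = s"
  proof -
    have "cnj p * d = s * (cnj p * p + cnj q * q) - q * (cnj p * r + cnj q * s)" by (simp add: d_def algebra_simps)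
    then show ?thesis using a b by simp
  qed
  have 2: "cnj q * d = - r"
  proof -
    have "cnj q * d = p * (cnj p * r + cnj q * s) - r * (cnj p * p + cnj q * q)" by (simp add: d_def algebra_simps)
    then show ?thesis using a b by simp
  qed
  have 3: "cnj r * d = - q"
  proof -
    have "cnj r * d = s * (cnj r * p + cnj s * q) - q * (cnj r * r + cnj s * s)" by (simp add: d_def algebra_simps)
    then show ?thesis using c e by simp
  qed
  have 4: "cnj s * d = p"
  proof -
    have "cnj s * d = p * (cnj r * r + cnj s * s) - r * (cnj r * p + cnj s * q)" by (simp add: d_def algebra_simps)
    then show ?thesis using c e by simp
  qed
  have dnz: "d \<noteq> 0" using 1 2 c by auto
  have r1: "p * cnj p + r * cnj r = 1"
  proof -
    have "d * (p * cnj p + r * cnj r) = p * (cnj p * d) + r * (cnj r * d)" by (simp add: algebra_simps)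
    also have "\<dots> = p * s + r * (- q)" by (simp only: 1 3)
    also have "\<dots> = d" by (simp add: d_def algebra_simps)
    finally have "d * (p * cnj p + r * cnj r) = d" .
    then show ?thesis using dnz by simp
  qed
  have r2: "q * cnj q + s * cnj s = 1"
  proof -
    have "d * (q * cnj q + s * cnj s) = q * (cnj q * d) + s * (cnj s * d)" by (simp add: algebra_simps)
    also have "\<dots> = q * (-r) + s * p" by (simp only: 2 4)
    also have "\<dots> = d" by (simp add: d_def algebra_simps)
    finally have "d * (q * cnj q + s * cnj s) = d" .
    then show ?thesis using dnz by simp
  qed
  have r3: "p * cnj q + r * cnj s = 0"
  proof -
    have "d * (p * cnj q + r * cnj s) = p * (cnj q * d) + r * (cnj s * d)" by (simp add: algebra_simps)
    also have "\<dots> = p * (-r) + r * p" by (simp only: 2 4)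
    also have "\<dots> = 0" by (simp add: d_def algebra_simps)
    finally have "d * (p * cnj q + r * cnj s) = 0" .
    then show ?thesis using dnz by simp
  qed
  have r4: "q * cnj p + s * cnj r = 0"
  proof -
    have "d * (q * cnj p + s * cnj r) = q * (cnj p * d) + s * (cnj r * d)" by (simp add: algebra_simps)
    also have "\<dots> = q * s + s * (-q)" by (simp only: 1 3)
    also have "\<dots> = 0" by (simp add: d_def algebra_simps)
    finally have "d * (q * cnj p + s * cnj r) = 0" .
    then show ?thesis using dnz by simp
  qed
  show ?thesis
  proof (subst cvec_eq, intro conjI)
    have "(cinner w x *s x + cinner w x' *s x') $ 1 = w$1 * (p * cnj p + r * cnj r) + w$2 * (p * cnj q + r * cnj s)"
      by (simp add: cinner_def sum_2 p_def q_def r_def s_def algebra_simps)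
    then show "w $ 1 = (cinner w x *s x + cinner w x' *s x') $ 1" using r1 r3 by simp
    have "(cinner w x *s x + cinner w x' *s x') $ 2 = w$1 * (q * cnj p + s * cnj r) + w$2 * (q * cnj q + s * cnj s)"
      by (simp add: cinner_def sum_2 p_def q_def r_def s_def algebra_simps)
    then show "w $ 2 = (cinner w x *s x + cinner w x' *s x') $ 2" using r2 r4 by simp
  qed
qed




definition coef :: "cmat \<Rightarrow> cvec \<Rightarrow> cvec \<Rightarrow> complex" where
  "coef M u w = cinner (M *v w) u"

lemma mv_outer: "outer u w *v v = cinner v w *s u"
  by (simp add: cvec_eq outer_def matrix_vector_mult_def cinner_def sum_2 algebra_simps)
lemma mv_add: "(M + N) *v v = M *v v + N *v v"
  by (simp add: vec_eq_iff matrix_vector_mult_def sum.distrib distrib_right)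
lemma mv_mscale: "mscale c M *v v = c *s (M *v v)"
  by (simp add: cvec_eq mscale_def matrix_vector_mult_def sum_2 algebra_simps)
lemma coef_add: "coef (M + N) u w = coef M u w + coef N u w"
  by (simp add: coef_def mv_add cinner_add_left)
lemma coef_mscale: "coef (mscale c M) u w = c * coef M u w"
  by (simp add: coef_def mv_mscale cinner_scale_left)
lemma coef_outer: "coef (outer p q) u w = cinner w q * cinner p u"
  by (simp add: coef_def mv_outer cinner_scale_left)
lemma coef_zero: "coef 0 u w = 0"
  by (simp add: coef_def cinner_def)

lemma cinner_combo:
  assumes "orthonormal_pair y y'"
  shows "cinner (a *s y + b *s y') y = a" "cinner (a *s y + b *s y') y' = b"
  using on_props[OF assms] by (simp_all add: cinner_add_left cinner_scale_left)

lemma norm_combo: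
  assumes "orthonormal_pair x x'"
  shows "norm (a *s x + b *s x') ^ 2 = cmod a ^ 2 + cmod b ^ 2"
proof -
  note P = on_props[OF assms]
  have "complex_of_real (norm (a *s x + b *s x') ^ 2) = cinner (a *s x + b *s x') (a *s x + b *s x')"
    by (simp add: cinner_self)
  also have "\<dots> = a * cnj a + b * cnj b"
    using P by (simp add: cinner_add_left cinner_add_right cinner_scale_left cinner_scale_right)
  also have "\<dots> = complex_of_real (cmod a ^ 2 + cmod b ^ 2)"
    by (simp only: of_real_add cmod_sq)
  finally show ?thesis by (simp only: of_real_eq_iff)
qed

lemma expand:
  assumes "orthonormal_pair x x'" "orthonormal_pair y y'"
  shows "M *v v = (coef M x y * cinner v y + coef M x y' * cinner v y') *s x
                 + (coef M x' y * cinner v y + coef M x' y' * cinner v y') *s x'"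
proof -
  have v: "v = cinner v y *s y + cinner v y' *s y'" by (rule complete[OF assms(2)])
  have My: "M *v y = coef M x y *s x + coef M x' y *s x'"
    unfolding coef_def by (rule complete[OF assms(1)])
  have My': "M *v y' = coef M x y' *s x + coef M x' y' *s x'"
    unfolding coef_def by (rule complete[OF assms(1)])
  have "M *v v = cinner v y *s (M *v y) + cinner v y' *s (M *v y')"
    by (subst v) (simp add: matrix_vector_right_distrib vector_scalar_commute)
  also have "\<dots> = (coef M x y * cinner v y + coef M x y' * cinner v y') *s x
                 + (coef M x' y * cinner v y + coef M x' y' * cinner v y') *s x'" unfolding My My'
    by (simp add: vector_add_ldistrib vector_sadd_rdistrib vector_smult_assoc mult.commute add_ac)
  finally show ?thesis .
qed

lemma norm_v:
  assumes "orthonormal_pair y y'"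
  shows "norm v ^ 2 = cmod (cinner v y) ^ 2 + cmod (cinner v y') ^ 2"
  by (subst complete[OF assms, of v]) (rule norm_combo[OF assms])

lemma norm_Mv:
  assumes "orthonormal_pair x x'" "orthonormal_pair y y'"
  shows "norm (M *v v) ^ 2 = cmod (coef M x y * cinner v y + coef M x y' * cinner v y') ^ 2
                 + cmod (coef M x' y * cinner v y + coef M x' y' * cinner v y') ^ 2"
  by (subst expand[OF assms]) (rule norm_combo[OF assms(1)])

lemma coef_eq:
  assumes "orthonormal_pair x x'" "orthonormal_pair y y'"
    and "coef M x y = coef N x y" "coef M x y' = coef N x y'"
    "coef M x' y = coef N x' y" "coef M x' y' = coef N x' y'"
  shows "M = N"
proof -
  have h: "M *v v = N *v v" for v
    using expand[OF assms(1,2), of M v] expand[OF assms(1,2), of N v] assms(3-6) by simp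
  have "M *v axis 1 1 = N *v axis 1 1" "M *v axis 2 1 = N *v axis 2 1" by (rule h)+
  then have "(M *v axis 1 1) $ 1 = (N *v axis 1 1) $ 1" "(M *v axis 1 1) $ 2 = (N *v axis 1 1) $ 2"
     "(M *v axis 2 1) $ 1 = (N *v axis 2 1) $ 1" "(M *v axis 2 1) $ 2 = (N *v axis 2 1) $ 2" by simp_all
  then show ?thesis
    unfolding cmat_eq matrix_vector_mult_def by (simp add: sum_2 axis_def)
qed

lemma opnorm_ge: "norm (M *v v) \<le> opnorm M * norm v"
  unfolding opnorm_def by (rule onorm[OF matrix_vector_mul_bounded_linear])

lemma opnorm_nonneg: "0 \<le> opnorm M"
  unfolding opnorm_def by (rule onorm_pos_le[OF matrix_vector_mul_bounded_linear])

lemma opnorm_le_sq: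
  assumes "0 \<le> s" "\<And>v. norm (M *v v) ^ 2 \<le> s * norm v ^ 2"
  shows "opnorm M \<le> sqrt s"
  unfolding opnorm_def
proof (rule onorm_le)
  fix v
  show "norm (M *v v) \<le> sqrt s * norm v"
  proof (rule power2_le_imp_le)
    show "(norm (M *v v))\<^sup>2 \<le> (sqrt s * norm v)\<^sup>2"
      using assms by (simp add: power_mult_distrib)
    show "0 \<le> sqrt s * norm v" using assms by simp
  qed
qed

lemma opnorm_ge_sq:
  "norm (M *v v) ^ 2 \<le> opnorm M ^ 2 * norm v ^ 2"
proof -
  have "norm (M *v v) ^ 2 \<le> (opnorm M * norm v) ^ 2"
    by (rule power_mono[OF opnorm_ge]) simp
  then show ?thesis by (simp add: power_mult_distrib)
qed




lemma amgm2:
  fixes A B G a b :: real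
  assumes "0 \<le> A" "0 \<le> B" "0 \<le> G" "G^2 \<le> A * B"
  shows "2 * G * a * b \<le> A * a^2 + B * b^2"
proof (cases "A = 0")
  case True
  then have "G = 0" using assms by (simp add: power2_eq_square) (metis assms(3) mult_eq_0_iff order_antisym_conv zero_le_square power2_eq_square)
  then show ?thesis using assms True by simp
next
  case False
  then have Ap: "A > 0" using assms by simp
  have "A * (A * a^2 + B * b^2 - 2 * G * a * b) = (A * a - G * b)^2 + (A * B - G^2) * b^2"
    by (simp add: power2_eq_square algebra_simps)
  also have "\<dots> \<ge> 0" using assms by simp
  finally have "A * (A * a^2 + B * b^2 - 2 * G * a * b) \<ge> 0" .
  then have "A * a^2 + B * b^2 - 2 * G * a * b \<ge> 0" using Ap by (simp add: zero_le_mult_iff)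
  then show ?thesis by simp
qed

lemma quadbound:
  fixes k11 k12 k21 k22 v1 v2 :: complex and s :: real
  assumes h1: "cmod k11^2 + cmod k21^2 \<le> s" and h2: "cmod k12^2 + cmod k22^2 \<le> s"
    and h12: "cmod (cnj k11 * k12 + cnj k21 * k22)^2 \<le> (s - (cmod k11^2 + cmod k21^2)) * (s - (cmod k12^2 + cmod k22^2))"
  shows "cmod (k11* v1 + k12* v2)^2 + cmod (k21* v1 + k22* v2)^2 \<le> s * (cmod v1^2 + cmod v2^2)"
proof -
  define H1 where "H1 = cmod k11^2 + cmod k21^2"
  define H2 where "H2 = cmod k12^2 + cmod k22^2"
  define g where "g = cnj k11 * k12 + cnj k21 * k22"
  define z where "z = cnj v1 * v2 * g"
  have "complex_of_real (cmod (k11* v1 + k12* v2)^2 + cmod (k21* v1 + k22* v2)^2)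
     = (k11* v1 + k12* v2) * cnj (k11* v1 + k12* v2) + (k21* v1 + k22* v2) * cnj (k21* v1 + k22* v2)"
    by (simp only: of_real_add cmod_sq)
  also have "\<dots> = (k11 * cnj k11 + k21 * cnj k21) * (v1 * cnj v1) + (k12 * cnj k12 + k22 * cnj k22) * (v2 * cnj v2) + (z + cnj z)"
    by (simp add: z_def g_def algebra_simps)
  also have "\<dots> = complex_of_real (H1 * cmod v1 ^2 + H2 * cmod v2^2) + (z + cnj z)"
    by (simp only: H1_def H2_def of_real_add of_real_mult cmod_sq)
  finally have e: "cmod (k11* v1 + k12* v2)^2 + cmod (k21* v1 + k22* v2)^2 = H1 * cmod v1 ^2 + H2 * cmod v2^2 + 2 * Re z"
    by (metis Re_complex_of_real complex_add_cnj plus_complex.sel(1))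
  have "Re z \<le> cmod z" by (rule complex_Re_le_cmod)
  also have "cmod z = cmod g * cmod v1 * cmod v2" by (simp add: z_def norm_mult)
  finally have rz: "2 * Re z \<le> 2 * cmod g * cmod v1 * cmod v2" by simp
  have "2 * cmod g * cmod v1 * cmod v2 \<le> (s - H1) * cmod v1^2 + (s - H2) * cmod v2^2"
    by (rule amgm2) (use h1 h2 h12 in \<open>auto simp: H1_def H2_def g_def\<close>)
  then show ?thesis using e rz by (simp add: algebra_simps)
qed




lemma small_t:
  fixes p q r \<sigma> :: complex
  assumes "cmod \<sigma> < 1"
  shows "\<exists>t s. 0 < t \<and> 0 \<le> s \<and> s < 1 \<and> (\<forall>v1 v2.
     cmod (complex_of_real (1 - t) * v1 + (of_real t * p) * v2)^2 + cmod ((of_real t * q) * v1 + (\<sigma> + of_real t * r) * v2)^2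
       \<le> s * (cmod v1^2 + cmod v2^2))"
proof -
  define R where "R = 1 + cmod p + cmod q + cmod r"
  define e where "e = 1 - cmod \<sigma>"
  define t where "t = e / (72 * R^2)"
  have R1: "1 \<le> R" by (simp add: R_def)
  have Rp: "cmod p \<le> R" "cmod q \<le> R" "cmod r \<le> R" by (simp_all add: R_def)
  have e0: "0 < e" "e \<le> 1" using assms by (simp_all add: e_def)
  have t0: "0 < t" using e0 R1 by (simp add: t_def)
  have tR2: "t * R^2 = e / 72" using R1 by (simp add: t_def)
  have R2: "R \<le> R^2" using R1 by (simp add: power2_eq_square)
  have tR: "t * R \<le> e / 72" using tR2 R2 t0 by (metis mult_left_mono less_imp_le)
  have tle: "t \<le> t * R" using t0 R1 by simp
  define k11 where "k11 = complex_of_real (1 - t)"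
  define k12 where "k12 = of_real t * p"
  define k21 where "k21 = of_real t * q"
  define k22 where "k22 = \<sigma> + of_real t * r"
  define s where "s = 1 - t"
  define H1 where "H1 = cmod k11^2 + cmod k21^2"
  define H2 where "H2 = cmod k12^2 + cmod k22^2"
  have t1: "t \<le> 1/72" using tR tle e0 by simp
  have cq: "cmod k21 \<le> t * R" using Rp t0 by (simp add: k21_def norm_mult)
  have cp: "cmod k12 \<le> t * R" using Rp t0 by (simp add: k12_def norm_mult)
  have c22: "cmod k22 \<le> 1 - e + t * R"
  proof -
    have "cmod k22 \<le> cmod \<sigma> + cmod (of_real t * r)" unfolding k22_def by (rule norm_triangle_ineq)
    also have "cmod (of_real t * r) \<le> t * R" using Rp t0 by (simp add: norm_mult)
    finally show ?thesis by (simp add: e_def)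
  qed
  have c22b: "cmod k22 \<le> 1" using c22 tR e0 by simp
  have c11: "cmod k11 = 1 - t" using t1 unfolding k11_def norm_of_real by simp
  have sH1: "t / 2 \<le> s - H1"
  proof -
    have "cmod k21^2 \<le> (t * R)^2" by (rule power_mono[OF cq]) simp
    also have "(t*R)^2 = t * (t * R^2)" by (simp add: power2_eq_square)
    also have "\<dots> \<le> t * (1/72)" using tR2 e0 t0 by simp
    finally have "cmod k21^2 \<le> t / 72" by simp
    moreover have "t^2 \<le> t / 72" using t1 t0 by (simp add: power2_eq_square)
    moreover have "cmod k11^2 = 1 - 2*t + t^2" unfolding c11 by (simp add: power2_eq_square algebra_simps)
    ultimately show ?thesis using t0 unfolding H1_def s_def by linarith
  qed
  have sH2: "e / 4 \<le> s - H2"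
  proof -
    define u where "u = t * R"
    have u0: "0 \<le> u" "u \<le> e / 72" using tR t0 R1 by (simp_all add: u_def)
    have "cmod k12^2 \<le> u^2" unfolding u_def by (rule power_mono[OF cp]) simp
    also have "u^2 \<le> u" proof - have "u \<le> 1" using u0 e0 by simp then show ?thesis using u0 by (simp add: power2_eq_square mult_left_le) qed
    finally have a: "cmod k12^2 \<le> u" .
    have "cmod k22^2 \<le> cmod k22" using c22b by (simp add: power2_eq_square mult_left_le)
    also have "\<dots> \<le> 1 - e + u" using c22 by (simp add: u_def)
    finally have b: "cmod k22^2 \<le> 1 - e + u" .
    have "t \<le> u" using tle by (simp add: u_def)
    then show ?thesis using a b u0 by (simp add: H2_def s_def)
  qed
  have g: "cmod (cnj k11 * k12 + cnj k21 * k22) \<le> 2 * (t * R)"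
  proof -
    have "cmod (cnj k11 * k12 + cnj k21 * k22) \<le> cmod (cnj k11 * k12) + cmod (cnj k21 * k22)"
      by (rule norm_triangle_ineq)
    also have "cmod (cnj k11 * k12) \<le> 1 * (t * R)" unfolding norm_mult complex_mod_cnj
      by (rule mult_mono) (use c11 t1 cp t0 in auto)
    also have "cmod (cnj k21 * k22) \<le> (t * R) * 1" unfolding norm_mult complex_mod_cnj
      by (rule mult_mono) (use cq c22b t0 R1 in auto)
    finally show ?thesis by (simp add: mult.commute)
  qed
  have g2: "cmod (cnj k11 * k12 + cnj k21 * k22)^2 \<le> (s - H1) * (s - H2)"
  proof -
    have "cmod (cnj k11 * k12 + cnj k21 * k22)^2 \<le> (2 * (t * R))^2" by (rule power_mono[OF g]) simp
    also have "\<dots> = 4 * t * (t * R^2)" by (simp add: power2_eq_square)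
    also have "\<dots> = (t / 2) * (e / 4) * (32 / 72)" by (simp add: tR2)
    also have "\<dots> \<le> (t / 2) * (e / 4)" using t0 e0 by simp
    also have "\<dots> \<le> (s - H1) * (s - H2)" by (rule mult_mono) (use sH1 sH2 t0 e0 in auto)
    finally show ?thesis .
  qed
  have H1s: "H1 \<le> s" using sH1 t0 by simp
  have H2s: "H2 \<le> s" using sH2 e0 by simp
  show ?thesis
  proof (intro exI conjI allI)
    show "0 < t" by (rule t0)
    show "0 \<le> s" using t1 by (simp add: s_def)
    show "s < 1" using t0 by (simp add: s_def)
    fix v1 v2 :: complex
    show "cmod (complex_of_real (1 - t) * v1 + (of_real t * p) * v2)^2 + cmod ((of_real t * q) * v1 + (\<sigma> + of_real t * r) * v2)^2
       \<le> s * (cmod v1^2 + cmod v2^2)"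
      using quadbound[of k11 k21 s k12 k22 v1 v2] H1s H2s g2
      unfolding H1_def H2_def k11_def k12_def k21_def k22_def by simp
  qed
qed




lemma coef_A:
  assumes "orthonormal_pair x x'" "orthonormal_pair y y'"
  shows "coef (outer x y + mscale \<sigma> (outer x' y') + mscale l B) x y = 1 + l * coef B x y"
    "coef (outer x y + mscale \<sigma> (outer x' y') + mscale l B) x y' = l * coef B x y'"
    "coef (outer x y + mscale \<sigma> (outer x' y') + mscale l B) x' y = l * coef B x' y"
    "coef (outer x y + mscale \<sigma> (outer x' y') + mscale l B) x' y' = \<sigma> + l * coef B x' y'"
  using on_props[OF assms(1)] on_props[OF assms(2)]
  by (simp_all add: coef_add coef_mscale coef_outer)

lemma L1:
  assumes xx: "orthonormal_pair x x'" and yy: "orthonormal_pair y y'" and sg: "cmod \<sigma> < 1"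
  shows "bj_orth (outer x y + mscale \<sigma> (outer x' y')) B \<longleftrightarrow> coef B x y = 0"
proof -
  define A where "A = outer x y + mscale \<sigma> (outer x' y')"
  have Aeq: "A = A + mscale 0 B" by (simp add: A_def cmat_eq mscale_def)
  note cA = coef_A[OF xx yy, of \<sigma> 0 B, folded Aeq[unfolded A_def], folded A_def]
  note Py = on_props[OF yy]
  have A_le: "opnorm A \<le> 1"
  proof -
    have "opnorm A \<le> sqrt 1"
    proof (rule opnorm_le_sq)
      fix v
      have "cmod (\<sigma> * cinner v y') ^ 2 \<le> cmod (cinner v y') ^ 2"
        unfolding norm_mult power_mult_distrib
      proof (rule mult_left_le_one_le)
        show "cmod \<sigma> ^ 2 \<le> 1" using sg by (simp add: power_le_one)
      qed simp_all
      then show "norm (A *v v) ^ 2 \<le> 1 * norm v ^ 2"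
        apply (subst norm_Mv[OF xx yy]) apply (subst norm_v[OF yy]) using cA by simp
    qed simp
    then show ?thesis by simp
  qed
  have nMy: "norm (M *v y) ^ 2 = cmod (coef M x y) ^ 2 + cmod (coef M x' y) ^ 2" for M
    unfolding norm_Mv[OF xx yy] using Py by simp
  have A_ge: "1 \<le> opnorm A"
  proof -
    have "norm (A *v y) ^ 2 = 1" using nMy[of A] cA by simp
    then have "norm (A *v y) = 1" using norm_ge_zero[of "A *v y"] unfolding power2_eq_1_iff by linarith
    moreover have "norm y = 1" using yy by (simp add: orthonormal_pair_def)
    ultimately show ?thesis using opnorm_ge[of A y] by simp
  qed
  have A1: "opnorm A = 1" using A_le A_ge by simp
  show ?thesis
  proof
    assume orth: "bj_orth (outer x y + mscale \<sigma> (outer x' y')) B"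
    show "coef B x y = 0"
    proof (rule ccontr)
      assume b0: "coef B x y \<noteq> 0"
      define p where "p = - coef B x y' / coef B x y"
      define q where "q = - coef B x' y / coef B x y"
      define r where "r = - coef B x' y' / coef B x y"
      obtain t s where ts: "0 < t" "0 \<le> s" "s < 1" and
        bnd: "\<And>v1 v2. cmod (complex_of_real (1 - t) * v1 + (of_real t * p) * v2)^2 + cmod ((of_real t * q) * v1 + (\<sigma> + of_real t * r) * v2)^2
       \<le> s * (cmod v1^2 + cmod v2^2)"
        using small_t[OF sg, of p q r] by blast
      define l where "l = - complex_of_real t / coef B x y"
      define M where "M = A + mscale l B"
      note cM = coef_A[OF xx yy, of \<sigma> l B, folded A_def, folded M_def]
      have c1: "coef M x y = complex_of_real (1 - t)" using cM(1) b0 by (simp add: l_def)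
      have c2: "coef M x y' = of_real t * p" using cM(2) b0 by (simp add: l_def p_def)
      have c3: "coef M x' y = of_real t * q" using cM(3) b0 by (simp add: l_def q_def)
      have c4: "coef M x' y' = \<sigma> + of_real t * r" using cM(4) b0 by (simp add: l_def r_def)
      have "opnorm M \<le> sqrt s"
      proof (rule opnorm_le_sq)
        fix v show "norm (M *v v) ^ 2 \<le> s * norm v ^ 2"
          apply (subst norm_Mv[OF xx yy]) apply (subst norm_v[OF yy]) unfolding c1 c2 c3 c4 by (rule bnd)
      qed (rule ts)
      also have "sqrt s < 1" using ts by simp
      finally have "opnorm M < opnorm A" using A1 by simp
      moreover have "opnorm A \<le> opnorm M" using orth unfolding bj_orth_def A_def M_def by blast
      ultimately show False by simp
    qed
  next
    assume b0: "coef B x y = 0"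
    show "bj_orth (outer x y + mscale \<sigma> (outer x' y')) B"
      unfolding bj_orth_def
    proof
      fix l
      define M where "M = A + mscale l B"
      note cM = coef_A[OF xx yy, of \<sigma> l B, folded A_def, folded M_def]
      have "1 \<le> norm (M *v y) ^ 2" using nMy[of M] cM b0 by simp
      then have "1 \<le> norm (M *v y)" using power2_le_imp_le[of 1 "norm (M *v y)"] by simp
      also have "\<dots> \<le> opnorm M * norm y" by (rule opnorm_ge)
      also have "norm y = 1" using yy by (simp add: orthonormal_pair_def)
      finally show "opnorm (outer x y + mscale \<sigma> (outer x' y')) \<le> opnorm (outer x y + mscale \<sigma> (outer x' y') + mscale l B)"
        using A1 by (simp add: A_def M_def)
    qed
  qed
qed




lemma parallelogram: "cmod (u + l)^2 + cmod (u - l)^2 = 2 * cmod u^2 + 2 * cmod l^2"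
proof -
  have "complex_of_real (cmod (u + l)^2 + cmod (u - l)^2) = (u + l) * cnj (u + l) + (u - l) * cnj (u - l)"
    by (simp only: of_real_add cmod_sq)
  also have "\<dots> = 2 * (u * cnj u) + 2 * (l * cnj l)" by (simp add: algebra_simps)
  also have "\<dots> = complex_of_real (2 * cmod u^2 + 2 * cmod l^2)"
    by (simp only: of_real_add of_real_mult cmod_sq of_real_numeral)
  finally show ?thesis by (simp only: of_real_eq_iff)
qed

lemma sq_le_cancel: "x^2 \<le> (y::real)^2 \<Longrightarrow> 0 \<le> y \<Longrightarrow> x \<le> y"
  by (rule power2_le_imp_le)

lemma L2:
  assumes aa: "orthonormal_pair a a'" and bb: "orthonormal_pair b b'"
    and H: "\<And>D. bj_orth C D \<longleftrightarrow> coef D a b = 0"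
  shows "\<exists>c \<tau>. c \<noteq> 0 \<and> cmod \<tau> < 1 \<and> C = mscale c (outer a b + mscale \<tau> (outer a' b'))"
proof -
  note Pa = on_props[OF aa] and Pb = on_props[OF bb]
  define c11 where "c11 = coef C a b"
  define c12 where "c12 = coef C a b'"
  define c21 where "c21 = coef C a' b"
  define c22 where "c22 = coef C a' b'"
  have nb: "norm b = 1" "norm b' = 1" using bb by (simp_all add: orthonormal_pair_def)
  have s1: "\<not> bj_orth C (outer a b)" using H Pa Pb by (simp add: coef_outer)
  define D0 where "D0 = mscale c11 (outer a b) + mscale (-1) C"
  have "coef D0 a b = 0" using Pa Pb by (simp add: D0_def coef_add coef_mscale coef_outer c11_def)
  then have "bj_orth C D0" using H by simp
  then have "opnorm C \<le> opnorm (C + mscale 1 D0)" unfolding bj_orth_def by blast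
  also have "C + mscale 1 D0 = mscale c11 (outer a b)" by (simp add: D0_def cmat_eq mscale_def)
  also have "opnorm (mscale c11 (outer a b)) \<le> sqrt (cmod c11 ^ 2)"
  proof (rule opnorm_le_sq)
    fix v
    have "cmod (c11 * cinner v b)^2 \<le> cmod c11^2 * (cmod (cinner v b)^2 + cmod (cinner v b')^2)"
      by (simp add: norm_mult power_mult_distrib algebra_simps)
    then show "norm (mscale c11 (outer a b) *v v)^2 \<le> cmod c11 ^ 2 * norm v ^ 2"
      apply (subst norm_Mv[OF aa bb]) apply (subst norm_v[OF bb])
      using Pa Pb by (simp add: coef_mscale coef_outer)
  qed simp
  finally have nC: "opnorm C \<le> cmod c11" by simp
  have nC2: "opnorm C ^ 2 \<le> cmod c11 ^ 2" by (rule power_mono[OF nC opnorm_nonneg])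
  have Cv: "norm (C *v v) ^ 2 \<le> cmod c11 ^ 2 * norm v ^ 2" for v
    using opnorm_ge_sq[of C v] mult_right_mono[OF nC2, of "norm v ^ 2"] by simp
  have e21: "c21 = 0"
  proof -
    have "norm (C *v b) ^ 2 = cmod c11 ^ 2 + cmod c21 ^ 2"
      using Pb by (subst norm_Mv[OF aa bb]) (simp add: c11_def c21_def)
    then show ?thesis using Cv[of b] nb by simp
  qed
  have e12: "c12 = 0"
  proof -
    define v where "v = cnj c11 *s b + cnj c12 *s b'"
    define N where "N = cmod c11 ^ 2 + cmod c12 ^ 2"
    have v1: "cinner v b = cnj c11" "cinner v b' = cnj c12" using cinner_combo[OF bb] by (simp_all add: v_def)
    have nv: "norm v ^ 2 = N" using norm_v[OF bb, of v] v1 by (simp add: N_def)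
    have "c11 * cnj c11 + c12 * cnj c12 = complex_of_real N" by (simp only: N_def of_real_add cmod_sq)
    then have "N ^ 2 \<le> norm (C *v v) ^ 2"
      apply (subst norm_Mv[OF aa bb]) using v1 by (simp add: c11_def c12_def)
    also have "\<dots> \<le> cmod c11 ^ 2 * N" using Cv[of v] nv by simp
    finally have "N * N \<le> cmod c11 ^ 2 * N" by (simp add: power2_eq_square)
    moreover have "N \<ge> 0" by (simp add: N_def)
    ultimately have "N \<le> cmod c11 ^ 2"
    proof (cases "N = 0")
      case True then show ?thesis by simp
    next
      case False
      then have "N > 0" using \<open>N \<ge> 0\<close> by simp
      then show ?thesis using \<open>N * N \<le> cmod c11 ^ 2 * N\<close> by (simp add: mult_le_cancel_right_pos)
    qed
    then show ?thesis by (simp add: N_def)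
  qed
  have e22: "cmod c22 \<le> cmod c11"
  proof -
    have "norm (C *v b') ^ 2 = cmod c12 ^ 2 + cmod c22 ^ 2"
      using Pb by (subst norm_Mv[OF aa bb]) (simp add: c12_def c22_def)
    then have "cmod c22 ^ 2 \<le> cmod c11 ^ 2" using Cv[of b'] nb e12 by simp
    then show ?thesis by (rule sq_le_cancel) simp
  qed
  have c0: "c11 \<noteq> 0"
  proof
    assume z: "c11 = 0"
    have "C = 0"
      by (rule coef_eq[OF aa bb]) (use z e12 e21 e22 in \<open>simp_all add: coef_zero c11_def c12_def c21_def c22_def\<close>)
    moreover have "bj_orth 0 (outer a b)"
      unfolding bj_orth_def
    proof
      fix l :: complex
      have "opnorm (0::cmat) \<le> sqrt 0" by (rule opnorm_le_sq) simp_all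
      then show "opnorm (0::cmat) \<le> opnorm (0 + mscale l (outer a b))" using opnorm_nonneg by (metis order_trans real_sqrt_zero)
    qed
    ultimately show False using s1 by simp
  qed
  have ne: "cmod c22 < cmod c11"
  proof (rule ccontr)
    assume "\<not> cmod c22 < cmod c11"
    then have eq: "cmod c22 = cmod c11" using e22 by simp
    define \<omega> where "\<omega> = c22 / c11"
    have om: "cmod \<omega> = 1" using eq c0 by (simp add: \<omega>_def norm_divide)
    define D1 where "D1 = outer a b + mscale (-\<omega>) (outer a' b')"
    have "coef D1 a b = 1" using Pa Pb by (simp add: D1_def coef_add coef_mscale coef_outer)
    then have "\<not> bj_orth C D1" using H by simp
    then obtain l where l: "opnorm (C + mscale l D1) < opnorm C" unfolding bj_orth_def by (auto simp: not_le)
    define M where "M = C + mscale l D1"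
    have cM: "coef M a b = c11 + l" "coef M a b' = 0" "coef M a' b = 0" "coef M a' b' = \<omega> * (c11 - l)"
      using Pa Pb e12 e21 c0
      by (simp_all add: M_def D1_def coef_add coef_mscale coef_outer c11_def c12_def c21_def c22_def \<omega>_def field_simps)
    define v where "v = 1 *s b + 1 *s b'"
    have v1: "cinner v b = 1" "cinner v b' = 1" using cinner_combo[OF bb, of 1 1] unfolding v_def by simp_all
    have nv: "norm v ^ 2 = 2" using norm_v[OF bb, of v] v1 by simp
    have "norm (M *v v) ^ 2 = cmod (c11 + l) ^ 2 + cmod (c11 - l) ^ 2"
      apply (subst norm_Mv[OF aa bb]) using v1 cM om by (simp add: norm_mult)
    also have "\<dots> \<ge> 2 * cmod c11 ^ 2" by (simp add: parallelogram)
    finally have "2 * cmod c11 ^ 2 \<le> opnorm M ^ 2 * 2" using opnorm_ge_sq[of M v] nv by simp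
    then have "cmod c11 \<le> opnorm M" using sq_le_cancel[of "cmod c11" "opnorm M"] opnorm_nonneg[of M] by simp
    then show False using l nC by (simp add: M_def)
  qed
  show ?thesis
  proof (intro exI conjI)
    show "c11 \<noteq> 0" by (rule c0)
    show "cmod (c22 / c11) < 1" using ne c0 by (simp add: norm_divide)
    show "C = mscale c11 (outer a b + mscale (c22 / c11) (outer a' b'))"
      by (rule coef_eq[OF aa bb]) (use Pa Pb c0 e12 e21 in \<open>simp_all add: coef_add coef_mscale coef_outer c11_def c12_def c21_def c22_def\<close>)
  qed
qed




lemma norm_smult_cvec: "norm (c *s (w::cvec)) = cmod c * norm w"
proof -
  have "norm (c *s w) ^ 2 = (cmod c * norm w) ^ 2"
    by (simp add: norm_sq norm_mult power_mult_distrib algebra_simps)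
  then show ?thesis by (rule power2_eq_imp_eq) simp_all
qed

lemma opnorm_mscale_le: "opnorm (mscale c M) \<le> cmod c * opnorm M"
  unfolding opnorm_def
proof (rule onorm_le)
  fix v
  have "norm (mscale c M *v v) = cmod c * norm (M *v v)" by (simp add: mv_mscale norm_smult_cvec)
  also have "\<dots> \<le> cmod c * (onorm ((*v) M) * norm v)"
    by (rule mult_left_mono) (simp_all add: opnorm_ge[unfolded opnorm_def])
  finally show "norm (mscale c M *v v) \<le> cmod c * onorm ((*v) M) * norm v" by (simp add: mult.assoc)
qed

lemma mscale_mscale: "mscale c (mscale d M) = mscale (c * d) M"
  by (simp add: cmat_eq mscale_def)

lemma opnorm_mscale: "opnorm (mscale c M) = cmod c * opnorm M"
proof (cases "c = 0")
  case True
  then show ?thesis using opnorm_mscale_le[of 0 M] opnorm_nonneg[of "mscale 0 M"] by simp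
next
  case False
  have "opnorm M = opnorm (mscale (1/c) (mscale c M))" using False by (simp add: mscale_mscale cmat_eq mscale_def)
  also have "\<dots> \<le> cmod (1/c) * opnorm (mscale c M)" by (rule opnorm_mscale_le)
  finally have "cmod c * opnorm M \<le> opnorm (mscale c M)" using False
    by (simp add: norm_divide field_simps)
  then show ?thesis using opnorm_mscale_le[of c M] by simp
qed

lemma bj_scale:
  assumes "c \<noteq> 0"
  shows "bj_orth (mscale c M) D \<longleftrightarrow> bj_orth M D"
proof -
  have e: "mscale c M + mscale l D = mscale c (M + mscale (l / c) D)" for l
    using assms by (simp add: cmat_eq mscale_def field_simps)
  have f: "opnorm (mscale c M) \<le> opnorm (mscale c M + mscale l D) \<longleftrightarrow> opnorm M \<le> opnorm (M + mscale (l / c) D)" for l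
    unfolding e opnorm_mscale using assms by simp
  show ?thesis
  proof
    assume h: "bj_orth (mscale c M) D"
    show "bj_orth M D" unfolding bj_orth_def
    proof
      fix l
      have "opnorm M \<le> opnorm (M + mscale ((l * c) / c) D)"
        using h f[of "l * c"] unfolding bj_orth_def by blast
      then show "opnorm M \<le> opnorm (M + mscale l D)" using assms by simp
    qed
  next
    assume h: "bj_orth M D"
    show "bj_orth (mscale c M) D" unfolding bj_orth_def
      using h f unfolding bj_orth_def by blast
  qed
qed

lemma proj_eq_scale:
  assumes "c \<noteq> 0"
  shows "proj_eq (mscale c Y) Y"
  unfolding proj_eq_def
proof (rule set_eqI, rule iffI)
  fix Z assume "Z \<in> range (\<lambda>d. mscale d (mscale c Y))"
  then obtain d where "Z = mscale d (mscale c Y)" by blast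
  then have "Z = mscale (d * c) Y" by (simp add: mscale_mscale)
  then show "Z \<in> range (\<lambda>d. mscale d Y)" by blast
next
  fix Z assume "Z \<in> range (\<lambda>d. mscale d Y)"
  then obtain d where "Z = mscale d Y" by blast
  then have "Z = mscale (d / c) (mscale c Y)" using assms by (simp add: mscale_mscale)
  then show "Z \<in> range (\<lambda>d. mscale d (mscale c Y))" by blast
qed

lemma mscale_one: "mscale 1 M = M" by (simp add: cmat_eq mscale_def)
lemma mscale_zero_right: "mscale d 0 = 0" by (simp add: cmat_eq mscale_def)

lemma proj_eq_obtain:
  assumes "proj_eq X Y" "Y \<noteq> 0"
  shows "\<exists>c. c \<noteq> 0 \<and> X = mscale c Y"
proof -
  have "X \<in> range (\<lambda>d. mscale d X)" by (metis mscale_one rangeI)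
  then obtain c where c: "X = mscale c Y" using assms(1) unfolding proj_eq_def by auto
  have "c \<noteq> 0"
  proof
    assume "c = 0"
    then have X0: "X = 0" using c by (simp add: cmat_eq mscale_def)
    have "Y \<in> range (\<lambda>d. mscale d Y)" by (metis mscale_one rangeI)
    then have "Y \<in> range (\<lambda>d. mscale d X)" using assms(1) unfolding proj_eq_def by simp
    then show False using X0 assms(2) by (auto simp: mscale_zero_right)
  qed
  then show ?thesis using c by blast
qed

lemma L1':
  assumes "orthonormal_pair x x'" "orthonormal_pair y y'"
  shows "bj_orth (outer x y) B \<longleftrightarrow> coef B x y = 0"
proof -
  have "outer x y = outer x y + mscale 0 (outer x' y')" by (simp add: cmat_eq mscale_def)
  then show ?thesis using L1[OF assms, of 0 B] by simp
qed

theorem lemma5p8: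
  fixes \<Phi> :: "cmat \<Rightarrow> cmat" and \<phi> :: "cvec \<Rightarrow> cvec"
    and x x' y y' :: cvec and \<sigma> :: complex
  assumes "bj_iso \<Phi>"
    and "bij \<phi>"
    and "(\<lambda>(u, v). (\<phi> u, \<phi> v)) ` {(u, v). orthonormal_pair u v}
           = {(u, v). orthonormal_pair u v}"
    and "\<forall>u v. proj_eq (\<Phi> (outer u v)) (outer (\<phi> u) (\<phi> v))"
    and "orthonormal_pair x x'" and "orthonormal_pair y y'"
    and "cmod \<sigma> < 1"
  shows "\<exists>\<tau>::complex. cmod \<tau> < 1 \<and>
           proj_eq (\<Phi> (outer x y + mscale \<sigma> (outer x' y')))
                   (outer (\<phi> x) (\<phi> y) + mscale \<tau> (outer (\<phi> x') (\<phi> y')))"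
proof -
  have onp: "orthonormal_pair (\<phi> u) (\<phi> v)" if "orthonormal_pair u v" for u v
  proof -
    have "(\<phi> u, \<phi> v) \<in> (\<lambda>(u, v). (\<phi> u, \<phi> v)) ` {(u, v). orthonormal_pair u v}"
      using that by force
    then show ?thesis using assms(3) by simp
  qed
  have aa: "orthonormal_pair (\<phi> x) (\<phi> x')" by (rule onp[OF assms(5)])
  have bb: "orthonormal_pair (\<phi> y) (\<phi> y')" by (rule onp[OF assms(6)])
  have bijP: "bij \<Phi>" and orthP: "\<And>X Y. bj_orth X Y \<longleftrightarrow> bj_orth (\<Phi> X) (\<Phi> Y)"
    using assms(1) unfolding bj_iso_def by blast+
  define \<Psi> where "\<Psi> = inv \<Phi>"
  have PP: "\<Phi> (\<Psi> D) = D" for D unfolding \<Psi>_def using bijP by (simp add: bij_is_surj surj_f_inv_f)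
  define A where "A = outer x y + mscale \<sigma> (outer x' y')"
  have nz: "outer (\<phi> x) (\<phi> y) \<noteq> 0"
  proof
    assume "outer (\<phi> x) (\<phi> y) = 0"
    then have "coef (outer (\<phi> x) (\<phi> y)) (\<phi> x) (\<phi> y) = 0" by (simp add: coef_zero)
    then show False using on_props[OF aa] on_props[OF bb] by (simp add: coef_outer)
  qed
  obtain c where c: "c \<noteq> 0" "\<Phi> (outer x y) = mscale c (outer (\<phi> x) (\<phi> y))"
    using proj_eq_obtain[OF assms(4)[rule_format, of x y] nz] by blast
  have H: "bj_orth (\<Phi> A) D \<longleftrightarrow> coef D (\<phi> x) (\<phi> y) = 0" for D
  proof -
    have "bj_orth (\<Phi> A) D \<longleftrightarrow> bj_orth A (\<Psi> D)" using orthP[of A "\<Psi> D"] PP by simp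
    also have "\<dots> \<longleftrightarrow> coef (\<Psi> D) x y = 0" unfolding A_def by (rule L1[OF assms(5,6,7)])
    also have "\<dots> \<longleftrightarrow> bj_orth (outer x y) (\<Psi> D)" by (rule L1'[OF assms(5,6), symmetric])
    also have "\<dots> \<longleftrightarrow> bj_orth (\<Phi> (outer x y)) D" using orthP[of "outer x y" "\<Psi> D"] PP by simp
    also have "\<dots> \<longleftrightarrow> bj_orth (outer (\<phi> x) (\<phi> y)) D" unfolding c(2) by (rule bj_scale[OF c(1)])
    also have "\<dots> \<longleftrightarrow> coef D (\<phi> x) (\<phi> y) = 0" by (rule L1'[OF aa bb])
    finally show ?thesis .
  qed
  obtain d \<tau> where d: "d \<noteq> 0" "cmod \<tau> < 1"
    "\<Phi> A = mscale d (outer (\<phi> x) (\<phi> y) + mscale \<tau> (outer (\<phi> x') (\<phi> y')))"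
    using L2[OF aa bb H] by blast
  show ?thesis
    using d proj_eq_scale[OF d(1)] unfolding A_def by metis
qed


end
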